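(* Consider the perturbed asynchronous consensus scheme: given $x_i^0\in\mathbb R$, $v_i^t=0$ for $t=-D,\dots,0$, and scalars $\{\delta^k\}$, at iteration $k$ $v_{i^k}^{k+1}=x_{i^k}^k+\delta^k$, $x_{i^k}^{k+1}=w_{i^ki^k}v_{i^k}^{k+1}+\sum_{j\in\mathcal N_{i^k}^{\rm in}}w_{i^kj}v_j^{k-d_j^k}$, and $v_j^{k+1}=v_j^k$, $x_j^{k+1}=x_j^k$ for $j\ne i^k$. Let $\mathbf h^k=[\mathbf x^{k\top},\mathbf v^{k\top},\mathbf v^{k-1\top},\dots,\mathbf v^{k-D\top}]^\top\in\mathbb R^{(D+2)I}$, so that $\mathbf h^{k+1}=\widehat{\mathbf W}^k(\mathbf h^k+\delta^k\mathbf e_{i^k})$. Let $C_2>0$, $\rho\in(0,1)$ and stochastic vectors $\{\boldsymbol\psi^k\}$ satisfy $\|\widehat{\mathbf W}^{k:t}-\mathbf 1\boldsymbol\psi^{t\top}\|\le C_2\rho^{k-t}$ for all $k\ge t\ge0$. Define $\bar h^0=\boldsymbol\psi^{0\top}\mathbf h^0$ and $\bar h^{k+1}=\boldsymbol\psi^{0\top}\mathbf h^0+\sum_{l=0}^k\psi_{i^l}^l\delta^l$. Then for all $k\in\mathbb N_0$, $$\|\mathbf h^{k+1}-\mathbf 1\bar h^{k+1}\|\le C_2\rho^k\|\mathbf h^0-\mathbf 1\bar h^0\|+C_2\sum_{l=0}^k\rho^{k-l}|\delta^l|.$$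
   Context: $\mathcal G=(\mathcal V,\mathcal E)$, $\mathcal V=\{1,\dots,I\}$, digraph without self-loops, $\mathcal N_i^{\rm in}=\{j:(j,i)\in\mathcal E\}$; $\mathbf W=(w_{ij})$ row-stochastic with $w_{ij}=0$ unless $i=j$ or $(j,i)\in\mathcal E$. $(i^k,\mathbf d^k)$ with $i^k\in\mathcal V$, $0\le d_j^k\le D$. $\mathbf e_i$ is the $i$-th canonical vector of $\mathbb R^{(D+2)I}$. Augmented matrix $\widehat{\mathbf W}^k$: entry $(r,m)$ equals $w_{i^ki^k}$ if $r=m=i^k$; $w_{i^kj}$ if $r=i^k$ and $m=j+(d_j^k+1)I$, $j\in\mathcal N^{\rm in}_{i^k}$; $1$ if $r=m\in\{1,\dots,2I\}\setminus\{i^k,i^k+I\}$; $1$ if $r\in\{2I+1,\dots,(D+2)I\}\cup\{i^k+I\}$ and $m=r-I$; $0$ otherwise. $\widehat{\mathbf W}^{k:t}=\widehat{\mathbf W}^k\cdots\widehat{\mathbf W}^t$ ($=\widehat{\mathbf W}^t$ if $k=t$). $\|\cdot\|$ is the Euclidean/spectral norm. *)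

theory Defs
  imports "HOL-Analysis.Analysis"
begin

text \<open>Vertices are 0-based: 0,...,I-1. Vectors of R^n are functions nat => real
  (only entries < n matter), n x n matrices are functions nat => nat => real.\<close>

definition vnorm :: "nat \<Rightarrow> (nat \<Rightarrow> real) \<Rightarrow> real" where
  "vnorm n x = sqrt (\<Sum>r<n. (x r)\<^sup>2)"

definition mvmult :: "nat \<Rightarrow> (nat \<Rightarrow> nat \<Rightarrow> real) \<Rightarrow> (nat \<Rightarrow> real) \<Rightarrow> (nat \<Rightarrow> real)" where
  "mvmult n A x = (\<lambda>r. \<Sum>m<n. A r m * x m)"

definition mmult :: "nat \<Rightarrow> (nat \<Rightarrow> nat \<Rightarrow> real) \<Rightarrow> (nat \<Rightarrow> nat \<Rightarrow> real) \<Rightarrow> (nat \<Rightarrow> nat \<Rightarrow> real)" where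
  "mmult n A B = (\<lambda>r m. \<Sum>l<n. A r l * B l m)"

definition opnorm :: "nat \<Rightarrow> (nat \<Rightarrow> nat \<Rightarrow> real) \<Rightarrow> real" where
  "opnorm n A = Sup {vnorm n (mvmult n A x) | x. vnorm n x \<le> 1}"

definition row_stochastic :: "nat \<Rightarrow> (nat \<Rightarrow> nat \<Rightarrow> real) \<Rightarrow> bool" where
  "row_stochastic n W \<longleftrightarrow> (\<forall>i<n. (\<forall>j<n. W i j \<ge> 0) \<and> (\<Sum>j<n. W i j) = 1)"

definition stochastic_vec :: "nat \<Rightarrow> (nat \<Rightarrow> real) \<Rightarrow> bool" where
  "stochastic_vec n p \<longleftrightarrow> (\<forall>r<n. p r \<ge> 0) \<and> (\<Sum>r<n. p r) = 1"

definition in_nbrs :: "(nat \<times> nat) set \<Rightarrow> nat \<Rightarrow> nat set" where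
  "in_nbrs E i = {j. (j, i) \<in> E}"

text \<open>Augmented matrix hat W^k (0-based version of the paper's definition),
  for active agent ik and delay vector d; size (D+2)I.\<close>
definition Waug :: "nat \<Rightarrow> nat \<Rightarrow> (nat \<times> nat) set \<Rightarrow> (nat \<Rightarrow> nat \<Rightarrow> real)
    \<Rightarrow> nat \<Rightarrow> (nat \<Rightarrow> nat) \<Rightarrow> nat \<Rightarrow> nat \<Rightarrow> real" where
  "Waug I D E W ik d r m =
     (if r = ik \<and> m = ik then W ik ik
      else if r = ik \<and> (\<exists>j\<in>in_nbrs E ik. m = j + (d j + 1) * I)
        then W ik (THE j. j \<in> in_nbrs E ik \<and> m = j + (d j + 1) * I)
      else if r = m \<and> r < 2 * I \<and> r \<noteq> ik \<and> r \<noteq> ik + I then 1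
      else if (2 * I \<le> r \<and> r < (D + 2) * I \<or> r = ik + I) \<and> m + I = r then 1
      else 0)"

text \<open>wprod n A t N = A (t+n) * ... * A t, i.e. hat W^{t+n:t}.\<close>
fun wprod :: "nat \<Rightarrow> (nat \<Rightarrow> nat \<Rightarrow> nat \<Rightarrow> real) \<Rightarrow> nat \<Rightarrow> nat \<Rightarrow> (nat \<Rightarrow> nat \<Rightarrow> real)" where
  "wprod N A t 0 = A t"
| "wprod N A t (Suc n) = mmult N (A (t + Suc n)) (wprod N A t n)"

definition Wprod :: "nat \<Rightarrow> (nat \<Rightarrow> nat \<Rightarrow> nat \<Rightarrow> real) \<Rightarrow> nat \<Rightarrow> nat \<Rightarrow> (nat \<Rightarrow> nat \<Rightarrow> real)" where
  "Wprod N A k t = wprod N A t (k - t)"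

text \<open>Stacked state h^k = [x^k; v^k; v^{k-1}; ...; v^{k-D}].\<close>
definition stack :: "nat \<Rightarrow> (nat \<Rightarrow> nat \<Rightarrow> real) \<Rightarrow> (int \<Rightarrow> nat \<Rightarrow> real) \<Rightarrow> nat \<Rightarrow> nat \<Rightarrow> real" where
  "stack I x v k r = (if r < I then x k r else v (int k - int (r div I - 1)) (r mod I))"

end

theory Submission
  imports Defs
begin


lemma vnorm_L2: "vnorm n f = L2_set f {..<n}"
  by (simp add: vnorm_def L2_set_def)

lemma vnorm_nonneg: "vnorm n f \<ge> 0" by (simp add: vnorm_L2)

lemma vnorm_cong: "(\<And>r. r < n \<Longrightarrow> f r = g r) \<Longrightarrow> vnorm n f = vnorm n g"
  unfolding vnorm_def by (intro arg_cong[where f=sqrt] sum.cong) auto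

lemma vnorm_add: "vnorm n (\<lambda>r. f r + g r) \<le> vnorm n f + vnorm n g"
  unfolding vnorm_L2 by (rule L2_set_triangle_ineq)

lemma vnorm_scale: "vnorm n (\<lambda>r. c * f r) = \<bar>c\<bar> * vnorm n f"
  by (simp add: vnorm_def power_mult_distrib sum_distrib_left[symmetric] real_sqrt_mult)

lemma vnorm_sum: "finite A \<Longrightarrow> vnorm n (\<lambda>r. \<Sum>l\<in>A. g l r) \<le> (\<Sum>l\<in>A. vnorm n (g l))"
proof (induction A rule: finite_induct)
  case empty then show ?case by (simp add: vnorm_def)
next
  case (insert a F)
  have "vnorm n (\<lambda>r. \<Sum>l\<in>insert a F. g l r) = vnorm n (\<lambda>r. g a r + (\<Sum>l\<in>F. g l r))"
    using insert by simp
  also have "\<dots> \<le> vnorm n (g a) + vnorm n (\<lambda>r. \<Sum>l\<in>F. g l r)" by (rule vnorm_add)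
  also have "\<dots> \<le> vnorm n (g a) + (\<Sum>l\<in>F. vnorm n (g l))" using insert by simp
  finally show ?case using insert by simp
qed

lemma mv_bound: "vnorm n (mvmult n M y) \<le> sqrt (\<Sum>r<n. \<Sum>m<n. (M r m)\<^sup>2) * vnorm n y"
proof -
  have c: "(mvmult n M y r)\<^sup>2 \<le> (\<Sum>m<n. (M r m)\<^sup>2) * (vnorm n y)\<^sup>2" for r
  proof -
    have "\<bar>mvmult n M y r\<bar> \<le> (\<Sum>m<n. \<bar>M r m\<bar> * \<bar>y m\<bar>)"
      unfolding mvmult_def by (rule order_trans[OF sum_abs]) (simp add: abs_mult)
    also have "\<dots> \<le> L2_set (M r) {..<n} * L2_set y {..<n}" by (rule L2_set_mult_ineq)
    finally have "\<bar>mvmult n M y r\<bar> \<le> L2_set (M r) {..<n} * vnorm n y" by (simp add: vnorm_L2)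
    then have "\<bar>mvmult n M y r\<bar>\<^sup>2 \<le> (L2_set (M r) {..<n} * vnorm n y)\<^sup>2"
      by (intro power_mono) auto
    then show ?thesis by (simp add: power_mult_distrib L2_set_def sum_nonneg)
  qed
  have "(\<Sum>r<n. (mvmult n M y r)\<^sup>2) \<le> (\<Sum>r<n. (\<Sum>m<n. (M r m)\<^sup>2) * (vnorm n y)\<^sup>2)"
    by (intro sum_mono c)
  also have "\<dots> = (\<Sum>r<n. \<Sum>m<n. (M r m)\<^sup>2) * (vnorm n y)\<^sup>2" by (simp add: sum_distrib_right)
  finally have "sqrt (\<Sum>r<n. (mvmult n M y r)\<^sup>2) \<le> sqrt ((\<Sum>r<n. \<Sum>m<n. (M r m)\<^sup>2) * (vnorm n y)\<^sup>2)"
    by (rule real_sqrt_le_mono)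
  then show ?thesis by (simp add: vnorm_def[of n "mvmult n M y"] real_sqrt_mult vnorm_nonneg)
qed

lemma opnorm_bound: "vnorm n (mvmult n M y) \<le> opnorm n M * vnorm n y"
proof -
  let ?S = "{vnorm n (mvmult n M x) | x. vnorm n x \<le> 1}"
  have bdd: "bdd_above ?S"
  proof (rule bdd_aboveI)
    fix z assume "z \<in> ?S"
    then obtain x where z: "z = vnorm n (mvmult n M x)" and x: "vnorm n x \<le> 1" by auto
    have "z \<le> sqrt (\<Sum>r<n. \<Sum>m<n. (M r m)\<^sup>2) * vnorm n x" using z mv_bound by simp
    also have "\<dots> \<le> sqrt (\<Sum>r<n. \<Sum>m<n. (M r m)\<^sup>2) * 1" by (intro mult_left_mono x) (auto intro!: sum_nonneg)
    finally show "z \<le> sqrt (\<Sum>r<n. \<Sum>m<n. (M r m)\<^sup>2)" by simp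
  qed
  show ?thesis
  proof (cases "vnorm n y = 0")
    case True
    then have "\<forall>m<n. y m = 0" by (simp add: vnorm_L2 L2_set_eq_0_iff)
    then have "vnorm n (mvmult n M y) = 0" by (simp add: mvmult_def vnorm_def)
    then show ?thesis using True by simp
  next
    case False
    define c where "c = vnorm n y"
    have cpos: "c > 0" using False vnorm_nonneg[of n y] c_def by simp
    define y' where "y' = (\<lambda>m. (1/c) * y m)"
    have "vnorm n y' = 1" unfolding y'_def vnorm_scale using cpos c_def by simp
    then have "vnorm n (mvmult n M y') \<in> ?S" by (intro CollectI exI[of _ y']) simp
    then have le: "vnorm n (mvmult n M y') \<le> opnorm n M" unfolding opnorm_def
      by (rule cSup_upper[OF _ bdd])
    have "mvmult n M y' = (\<lambda>r. (1/c) * mvmult n M y r)"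
      by (simp add: y'_def mvmult_def sum_distrib_left mult_ac)
    then have "vnorm n (mvmult n M y') = (1/c) * vnorm n (mvmult n M y)"
      using cpos by (simp only: vnorm_scale) simp
    with le cpos have "vnorm n (mvmult n M y) \<le> c * opnorm n M"
      by (simp add: field_simps)
    then show ?thesis by (simp add: c_def mult.commute)
  qed
qed

lemma mv_add: "mvmult n A (\<lambda>m. f m + g m) r = mvmult n A f r + mvmult n A g r"
  by (simp add: mvmult_def distrib_left sum.distrib)

lemma mv_scale: "mvmult n A (\<lambda>m. c * f m) r = c * mvmult n A f r"
  by (simp add: mvmult_def sum_distrib_left mult_ac)

lemma mv_sum: "mvmult n A (\<lambda>m. \<Sum>l\<in>L. f l m) r = (\<Sum>l\<in>L. mvmult n A (f l) r)"
  unfolding mvmult_def by (simp add: sum_distrib_left) (rule sum.swap)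

lemma mv_mmult: "mvmult n (mmult n A B) y r = mvmult n A (mvmult n B y) r"
  unfolding mvmult_def mmult_def
  by (simp add: sum_distrib_left sum_distrib_right mult.assoc) (rule sum.swap)

lemma mv_cong: "(\<And>m. m < n \<Longrightarrow> f m = g m) \<Longrightarrow> mvmult n A f r = mvmult n A g r"
  unfolding mvmult_def by (rule sum.cong) auto

lemma Wprod_same: "Wprod N A k k = A k" by (simp add: Wprod_def)

lemma Wprod_Suc: "l \<le> k \<Longrightarrow> Wprod N A (Suc k) l = mmult N (A (Suc k)) (Wprod N A k l)"
  by (simp add: Wprod_def Suc_diff_le)



lemma waug_other:
  assumes "r < (D+2)*I" "r \<noteq> ik" "ik < I"
  shows "Waug I D E W ik d r m = (if m = (if r < 2*I \<and> r \<noteq> ik + I then r else r - I) then 1 else 0)"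
proof -
  have W: "Waug I D E W ik d r m = (if r = m \<and> r < 2 * I \<and> r \<noteq> ik \<and> r \<noteq> ik + I then 1
      else if (2 * I \<le> r \<and> r < (D + 2) * I \<or> r = ik + I) \<and> m + I = r then 1 else 0)"
    unfolding Waug_def using assms(2) by simp
  show ?thesis
  proof (cases "r < 2*I \<and> r \<noteq> ik + I")
    case True
    then show ?thesis unfolding W using assms by auto
  next
    case False
    then have "2 * I \<le> r \<or> r = ik + I" by auto
    then have "(2 * I \<le> r \<and> r < (D + 2) * I \<or> r = ik + I)" "I \<le> r" using assms by auto
    then show ?thesis unfolding W using False by auto
  qed
qed

lemma waug_row:
  assumes nb: "in_nbrs E ik \<subseteq> {..<I}" and ik: "ik < I" and db: "\<forall>j. d j \<le> D"
  shows "(\<Sum>m<(D+2)*I. Waug I D E W ik d ik m * y m)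
     = W ik ik * y ik + (\<Sum>j\<in>in_nbrs E ik. W ik j * y (j + (d j + 1) * I))"
proof -
  define \<phi> where "\<phi> = (\<lambda>j. j + (d j + 1) * I)"
  define S where "S = \<phi> ` in_nbrs E ik"
  have fin: "finite (in_nbrs E ik)" using nb finite_subset by blast
  have modj: "\<phi> j mod I = j" if "j < I" for j unfolding \<phi>_def using that mod_mult_self1[of j "d j + 1" I] by simp
  have inj: "inj_on \<phi> (in_nbrs E ik)"
  proof (rule inj_onI)
    fix a b assume a: "a \<in> in_nbrs E ik" and b: "b \<in> in_nbrs E ik" and eq: "\<phi> a = \<phi> b"
    have "a < I" "b < I" using a b nb by auto
    then have "a = \<phi> a mod I" "b = \<phi> b mod I" using modj by auto
    then show "a = b" using eq by simp
  qed
  have phige: "\<phi> j \<ge> I" for j by (simp add: \<phi>_def)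
  have philt: "\<phi> j < (D+2)*I" if "j < I" for j
  proof -
    have "\<phi> j < I + (d j + 1) * I" using that by (simp add: \<phi>_def)
    also have "\<dots> \<le> I + (D+1)*I" using db by simp
    finally show ?thesis by (simp add: algebra_simps)
  qed
  have Ssub: "insert ik S \<subseteq> {..<(D+2)*I}" using ik philt nb by (auto simp: S_def)
  have ikS: "ik \<notin> S"
  proof
    assume "ik \<in> S"
    then obtain j where "ik = \<phi> j" by (auto simp: S_def)
    then show False using phige[of j] ik by simp
  qed
  let ?g = "\<lambda>m. Waug I D E W ik d ik m * y m"
  have zero: "?g m = 0" if "m \<notin> insert ik S" for m
  proof -
    have nex: "\<not> (\<exists>j\<in>in_nbrs E ik. m = j + (d j + 1) * I)" using that by (auto simp: S_def \<phi>_def)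
    have nm: "m \<noteq> ik" using that by auto
    have n4: "\<not> (m + I = ik)" using ik by auto
    have n5: "ik \<noteq> ik + I" using ik by auto
    have "Waug I D E W ik d ik m = 0"
      unfolding Waug_def using nex nm n4 n5 by (simp only: if_False simp_thms)
    then show ?thesis by simp
  qed
  have "(\<Sum>m<(D+2)*I. ?g m) = (\<Sum>m\<in>insert ik S. ?g m)"
    by (rule sum.mono_neutral_right) (use Ssub zero in auto)
  also have "\<dots> = ?g ik + (\<Sum>m\<in>S. ?g m)"
    using ikS fin by (simp add: S_def)
  also have "(\<Sum>m\<in>S. ?g m) = (\<Sum>j\<in>in_nbrs E ik. ?g (\<phi> j))"
    unfolding S_def by (rule sum.reindex[OF inj, unfolded comp_def])
  also have "\<dots> = (\<Sum>j\<in>in_nbrs E ik. W ik j * y (j + (d j + 1) * I))"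
  proof (rule sum.cong)
    fix j assume j: "j \<in> in_nbrs E ik"
    have ne: "\<phi> j \<noteq> ik" using phige[of j] ik by auto
    have ex: "\<exists>j'\<in>in_nbrs E ik. \<phi> j = j' + (d j' + 1) * I" using j by (auto simp: \<phi>_def)
    have the: "(THE j'. j' \<in> in_nbrs E ik \<and> \<phi> j = j' + (d j' + 1) * I) = j"
    proof (rule the_equality)
      show "j \<in> in_nbrs E ik \<and> \<phi> j = j + (d j + 1) * I" using j by (simp add: \<phi>_def)
    next
      fix j' assume "j' \<in> in_nbrs E ik \<and> \<phi> j = j' + (d j' + 1) * I"
      then have "\<phi> j' = \<phi> j" "j' \<in> in_nbrs E ik" by (auto simp: \<phi>_def)
      then show "j' = j" using inj_onD[OF inj] j by blast
    qed
    have "Waug I D E W ik d ik (\<phi> j) = W ik (THE j'. j' \<in> in_nbrs E ik \<and> \<phi> j = j' + (d j' + 1) * I)"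
      unfolding Waug_def using ne ex by (simp only: if_False if_True simp_thms)
    then show "?g (\<phi> j) = W ik j * y (j + (d j + 1) * I)"
      using the by (simp add: \<phi>_def)
  qed simp
  finally have ch: "(\<Sum>m<(D+2)*I. ?g m) = ?g ik + (\<Sum>j\<in>in_nbrs E ik. W ik j * y (j + (d j + 1) * I))" .
  have "Waug I D E W ik d ik ik = W ik ik" by (simp add: Waug_def)
  with ch show ?thesis by simp
qed



theorem proposition2:
  fixes I D :: nat
    and E :: "(nat \<times> nat) set"
    and W :: "nat \<Rightarrow> nat \<Rightarrow> real"
    and ag :: "nat \<Rightarrow> nat"
    and d :: "nat \<Rightarrow> nat \<Rightarrow> nat"
    and \<delta> :: "nat \<Rightarrow> real"
    and x :: "nat \<Rightarrow> nat \<Rightarrow> real"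
    and v :: "int \<Rightarrow> nat \<Rightarrow> real"
    and C2 \<rho> :: real
    and \<psi> :: "nat \<Rightarrow> nat \<Rightarrow> real"
    and hbar :: "nat \<Rightarrow> real"
  defines "N \<equiv> (D + 2) * I"
  assumes E_sub: "E \<subseteq> {0..<I} \<times> {0..<I}"
    and E_noloop: "\<forall>i. (i, i) \<notin> E"
    and W_stoch: "row_stochastic I W"
    and W_supp: "\<forall>i<I. \<forall>j<I. W i j \<noteq> 0 \<longrightarrow> i = j \<or> (j, i) \<in> E"
    and ag_range: "\<forall>k. ag k < I"
    and d_bound: "\<forall>k j. d k j \<le> D"
    and v_init: "\<forall>t j. - int D \<le> t \<and> t \<le> 0 \<longrightarrow> v t j = 0"
    and v_act: "\<forall>k. v (int k + 1) (ag k) = x k (ag k) + \<delta> k"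
    and x_act: "\<forall>k. x (Suc k) (ag k) = W (ag k) (ag k) * v (int k + 1) (ag k)
                    + (\<Sum>j\<in>in_nbrs E (ag k). W (ag k) j * v (int k - int (d k j)) j)"
    and v_pass: "\<forall>k j. j < I \<and> j \<noteq> ag k \<longrightarrow> v (int k + 1) j = v (int k) j"
    and x_pass: "\<forall>k j. j < I \<and> j \<noteq> ag k \<longrightarrow> x (Suc k) j = x k j"
    and C2_pos: "C2 > 0"
    and rho: "0 < \<rho>" "\<rho> < 1"
    and psi_stoch: "\<forall>k. stochastic_vec N (\<psi> k)"
    and contraction: "\<forall>k t. t \<le> k \<longrightarrow>
        opnorm N (\<lambda>r m. Wprod N (\<lambda>l. Waug I D E W (ag l) (d l)) k t r m - \<psi> t m)
          \<le> C2 * \<rho> ^ (k - t)"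
    and hbar0: "hbar 0 = (\<Sum>r<N. \<psi> 0 r * stack I x v 0 r)"
    and hbarS: "\<forall>k. hbar (Suc k) = (\<Sum>r<N. \<psi> 0 r * stack I x v 0 r)
                    + (\<Sum>l\<le>k. \<psi> l (ag l) * \<delta> l)"
  shows "\<forall>k. vnorm N (\<lambda>r. stack I x v (Suc k) r - hbar (Suc k))
           \<le> C2 * \<rho> ^ k * vnorm N (\<lambda>r. stack I x v 0 r - hbar 0)
             + C2 * (\<Sum>l\<le>k. \<rho> ^ (k - l) * \<bar>\<delta> l\<bar>)"
proof -
  have I0: "0 < I" using ag_range[rule_format, of 0] by simp
  have nb: "\<And>i. in_nbrs E i \<subseteq> {..<I}" using E_sub by (auto simp: in_nbrs_def)
  have agN: "ag k < N" for k using ag_range[rule_format, of k] by (simp add: N_def)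
  define A where "A = (\<lambda>l. Waug I D E W (ag l) (d l))"
  define H where "H = stack I x v"
  define e where "e = (\<lambda>(i::nat) (m::nat). if m = i then (1::real) else 0)"
  have sel: "(\<Sum>m<N. (if m = c then 1 else 0) * y m) = y c" if "c < N" for c and y :: "nat \<Rightarrow> real"
  proof -
    have "(\<Sum>m<N. (if m = c then 1 else 0) * y m) = (\<Sum>m<N. if m = c then y m else 0)"
      by (rule sum.cong) auto
    also have "\<dots> = y c" using that by (simp add: sum.delta)
    finally show ?thesis .
  qed
  have dk: "\<forall>j. d k j \<le> D" for k using d_bound by auto
  have rowA: "mvmult N (A k) (\<lambda>_. 1) r = 1" if r: "r < N" for k r
  proof (cases "r = ag k")
    case True
    have "mvmult N (A k) (\<lambda>_. 1) r = W (ag k) (ag k) + (\<Sum>j\<in>in_nbrs E (ag k). W (ag k) j)"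
      using waug_row[OF nb ag_range[rule_format, of k] dk, where W=W and y="\<lambda>_. 1"] True
      by (simp add: mvmult_def A_def N_def)
    also have "(\<Sum>j\<in>in_nbrs E (ag k). W (ag k) j) = (\<Sum>j\<in>{..<I} - {ag k}. W (ag k) j)"
    proof (rule sum.mono_neutral_left)
      show "in_nbrs E (ag k) \<subseteq> {..<I} - {ag k}" using nb E_noloop by (auto simp: in_nbrs_def)
      show "\<forall>i\<in>{..<I} - {ag k} - in_nbrs E (ag k). W (ag k) i = 0"
        using W_supp ag_range by (auto simp: in_nbrs_def)
    qed simp
    also have "W (ag k) (ag k) + \<dots> = (\<Sum>j<I. W (ag k) j)"
      using ag_range by (simp add: sum.remove[of "{..<I}" "ag k"])
    also have "\<dots> = 1" using W_stoch ag_range unfolding row_stochastic_def by auto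
    finally show ?thesis .
  next
    case False
    have "mvmult N (A k) (\<lambda>_. 1) r = (\<Sum>m<N. (if m = (if r < 2*I \<and> r \<noteq> ag k + I then r else r - I) then 1 else 0) * 1)"
      unfolding mvmult_def A_def using waug_other[of r D I "ag k"] r False ag_range by (simp add: N_def)
    also have "\<dots> = 1" by (rule trans[OF sel]) (use r in auto)
    finally show ?thesis .
  qed
  have rowW: "mvmult N (wprod N A t n) (\<lambda>_. 1) r = 1" if "r < N" for t n r
    using that
  proof (induction n arbitrary: r)
    case 0 then show ?case using rowA by simp
  next
    case (Suc n)
    have "mvmult N (wprod N A t (Suc n)) (\<lambda>_. 1) r = mvmult N (A (t + Suc n)) (mvmult N (wprod N A t n) (\<lambda>_. 1)) r"
      by (simp add: mv_mmult)
    also have "\<dots> = mvmult N (A (t + Suc n)) (\<lambda>_. 1) r" by (rule mv_cong) (use Suc in auto)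
    finally show ?case using rowA Suc by simp
  qed
  have step: "H (Suc k) r = mvmult N (A k) (\<lambda>m. H k m + \<delta> k * e (ag k) m) r" if r: "r < N" for k r
  proof -
    let ?ik = "ag k"
    let ?y = "\<lambda>m. H k m + \<delta> k * e (ag k) m"
    have ik: "?ik < I" using ag_range by auto
    show ?thesis
    proof (cases "r = ?ik")
      case True
      have "mvmult N (A k) ?y r = W ?ik ?ik * ?y ?ik + (\<Sum>j\<in>in_nbrs E ?ik. W ?ik j * ?y (j + (d k j + 1) * I))"
        using waug_row[OF nb ik dk, where W=W and y="?y"] True by (simp add: mvmult_def A_def N_def)
      also have "(\<Sum>j\<in>in_nbrs E ?ik. W ?ik j * ?y (j + (d k j + 1) * I)) = (\<Sum>j\<in>in_nbrs E ?ik. W ?ik j * v (int k - int (d k j)) j)"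
      proof (rule sum.cong)
        fix j assume "j \<in> in_nbrs E ?ik"
        then have j: "j < I" using nb by auto
        have dv: "(j + (d k j + 1) * I) div I = d k j + 1" using j I0 div_mult_self1[of I j "d k j + 1"] by simp
        have md: "(j + (d k j + 1) * I) mod I = j" using j mod_mult_self1[of j "d k j + 1" I] by simp
        have "\<not> (j + (d k j + 1) * I < I)" by simp
        then show "W ?ik j * ?y (j + (d k j + 1) * I) = W ?ik j * v (int k - int (d k j)) j"
          using dv md ik unfolding H_def stack_def e_def by (auto simp del: div_mult_self2 div_mult_self1)
      qed simp
      also have "?y ?ik = v (int k + 1) ?ik" using v_act ik by (simp add: H_def stack_def e_def)
      finally show ?thesis using True x_act ik by (simp add: H_def stack_def)
    next
      case False
      define c where "c = (if r < 2*I \<and> r \<noteq> ?ik + I then r else r - I)"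
      have cN: "c < N" using r by (simp add: c_def less_imp_diff_less)
      have "mvmult N (A k) ?y r = (\<Sum>m<N. (if m = c then 1 else 0) * ?y m)"
        unfolding mvmult_def A_def c_def using waug_other[of r D I "ag k"] r False ik by (simp add: N_def)
      also have "\<dots> = ?y c" by (rule sel[OF cN])
      finally have eq: "mvmult N (A k) ?y r = ?y c" .
      show ?thesis
      proof -
        consider (a) "r < I" | (b) "I \<le> r" "r < 2*I" "r \<noteq> ?ik + I" | (c) "r = ?ik + I" | (d) "2*I \<le> r" by linarith
        then show ?thesis
        proof cases
          case a
          then show ?thesis using eq False x_pass by (simp add: c_def H_def stack_def e_def)
        next
          case b
          have dv: "r div I = 1" using b by (simp add: div_nat_eqI)
          have md: "r mod I = r - I" using b by (simp add: le_mod_geq)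
          have ne: "r - I \<noteq> ?ik" using b by auto
          have lt: "r - I < I" using b by simp
          have vp: "v (1 + int k) (r - I) = v (int k) (r - I)"
            using v_pass[rule_format, of "r - I" k] ne lt by (simp only: add.commute simp_thms)
          show ?thesis using eq False b dv md ne lt vp
            by (simp add: c_def H_def stack_def e_def)
        next
          case c
          have dv: "r div I = 1" using c ik by (simp add: div_nat_eqI)
          have md: "r mod I = ?ik" using c ik by simp
          have va: "v (1 + int k) ?ik = x k ?ik + \<delta> k" using v_act[rule_format, of k] by (simp only: add.commute)
          show ?thesis using eq c dv md va ik I0 by (simp add: c_def H_def stack_def e_def)
        next
          case d
          define q where "q = (r - I) div I"
          have q1: "q \<ge> 1" using d I0 by (simp add: q_def div_greater_zero_iff Suc_le_eq)
          have rI: "r = (r - I) + I" using d by simp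
          have dv: "r div I = q + 1" using I0 by (subst rI) (simp add: q_def)
          have md: "r mod I = (r - I) mod I" by (subst rI) simp
          have nlt: "\<not> r - I < I" using d by simp
          have ne: "r - I \<noteq> ?ik" using ik d by auto
          have ceq: "c = r - I" using d by (simp add: c_def)
          have "?y c = v (int k - int (q - 1)) ((r - I) mod I)"
            using ceq nlt ne by (simp add: H_def stack_def e_def q_def[symmetric])
          moreover have "H (Suc k) r = v (1 + int k - int q) ((r - I) mod I)"
            using d I0 dv md by (simp add: H_def stack_def)
          moreover have "int k - int (q - 1) = 1 + int k - int q" using q1 by simp
          ultimately show ?thesis using eq by (simp only:)
        qed
      qed
    qed
  qed
  have unroll: "H (Suc k) r = mvmult N (Wprod N A k 0) (H 0) r
      + (\<Sum>l\<le>k. \<delta> l * mvmult N (Wprod N A k l) (e (ag l)) r)" if "r < N" for k r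
    using that
  proof (induction k arbitrary: r)
    case 0
    show ?case using step[OF 0] by (simp add: Wprod_same mv_add mv_scale)
  next
    case (Suc k)
    let ?A = "A (Suc k)"
    have "H (Suc (Suc k)) r = mvmult N ?A (\<lambda>m. H (Suc k) m + \<delta> (Suc k) * e (ag (Suc k)) m) r"
      using step[OF Suc.prems] .
    also have "\<dots> = mvmult N ?A (\<lambda>m. (mvmult N (Wprod N A k 0) (H 0) m
      + (\<Sum>l\<le>k. \<delta> l * mvmult N (Wprod N A k l) (e (ag l)) m)) + \<delta> (Suc k) * e (ag (Suc k)) m) r"
      by (rule mv_cong) (simp add: Suc.IH)
    also have "\<dots> = mvmult N ?A (mvmult N (Wprod N A k 0) (H 0)) r
      + (\<Sum>l\<le>k. \<delta> l * mvmult N ?A (mvmult N (Wprod N A k l) (e (ag l))) r) + \<delta> (Suc k) * mvmult N ?A (e (ag (Suc k))) r"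
      by (simp add: mv_add mv_scale mv_sum)
    also have "\<dots> = mvmult N (Wprod N A (Suc k) 0) (H 0) r
      + (\<Sum>l\<le>k. \<delta> l * mvmult N (Wprod N A (Suc k) l) (e (ag l)) r) + \<delta> (Suc k) * mvmult N (Wprod N A (Suc k) (Suc k)) (e (ag (Suc k))) r"
      by (simp add: Wprod_Suc mv_mmult Wprod_same)
    finally show ?case by simp
  qed
  have contr: "opnorm N (\<lambda>r m. Wprod N A k t r m - \<psi> t m) \<le> C2 * \<rho> ^ (k - t)" if "t \<le> k" for k t
    unfolding A_def by (rule contraction[rule_format, OF that])
  have mvM: "mvmult N (\<lambda>r m. Wprod N A k t r m - \<psi> t m) y r = mvmult N (Wprod N A k t) y r - (\<Sum>m<N. \<psi> t m * y m)" for k t y r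
    by (simp add: mvmult_def left_diff_distrib sum_subtractf)
  have psisum: "(\<Sum>m<N. \<psi> t m) = 1" for t using psi_stoch by (simp add: stochastic_vec_def)
  have ve: "vnorm N (e i) = 1" if "i < N" for i
  proof -
    have "(\<Sum>r<N. (e i r)\<^sup>2) = (\<Sum>r<N. if r = i then 1 else 0)" by (rule sum.cong) (auto simp: e_def)
    then show ?thesis using that by (simp add: vnorm_def)
  qed
  show ?thesis
  proof
    fix k
    define M where "M = (\<lambda>t r m. Wprod N A k t r m - \<psi> t m)"
    define f0 where "f0 = mvmult N (M 0) (\<lambda>r. H 0 r - hbar 0)"
    define g where "g = (\<lambda>l r. \<delta> l * mvmult N (M l) (e (ag l)) r)"
    have dec: "H (Suc k) r - hbar (Suc k) = f0 r + (\<Sum>l\<le>k. g l r)" if r: "r < N" for r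
    proof -
      have a: "mvmult N (Wprod N A k 0) (\<lambda>r. H 0 r - hbar 0) r = mvmult N (Wprod N A k 0) (H 0) r - hbar 0"
      proof -
        have "mvmult N (Wprod N A k 0) (\<lambda>r. H 0 r - hbar 0) r = mvmult N (Wprod N A k 0) (H 0) r - hbar 0 * mvmult N (Wprod N A k 0) (\<lambda>_. 1) r"
          by (simp add: mvmult_def right_diff_distrib left_diff_distrib sum_subtractf sum_distrib_left mult_ac)
        then show ?thesis using rowW[OF r] by (simp add: Wprod_def)
      qed
      have b: "(\<Sum>m<N. \<psi> 0 m * (H 0 m - hbar 0)) = 0"
        using hbar0 psisum[of 0] by (simp add: right_diff_distrib sum_subtractf sum_distrib_right[symmetric] H_def)
      have c: "(\<Sum>m<N. \<psi> l m * e (ag l) m) = \<psi> l (ag l)" for l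
        using agN[of l] by (simp add: e_def if_distrib sum.delta cong: if_cong)
      have "f0 r = mvmult N (Wprod N A k 0) (H 0) r - hbar 0"
        unfolding f0_def M_def mvM a b by simp
      moreover have "g l r = \<delta> l * mvmult N (Wprod N A k l) (e (ag l)) r - \<psi> l (ag l) * \<delta> l" for l
        unfolding g_def M_def mvM c by (simp add: algebra_simps)
      ultimately show ?thesis
        using unroll[OF r, of k] hbarS hbar0
        by (simp add: sum_subtractf H_def)
    qed
    have "vnorm N (\<lambda>r. stack I x v (Suc k) r - hbar (Suc k)) = vnorm N (\<lambda>r. f0 r + (\<Sum>l\<le>k. g l r))"
      by (rule vnorm_cong) (simp add: dec[unfolded H_def])
    also have "\<dots> \<le> vnorm N f0 + vnorm N (\<lambda>r. \<Sum>l\<le>k. g l r)" by (rule vnorm_add)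
    also have "\<dots> \<le> vnorm N f0 + (\<Sum>l\<le>k. vnorm N (g l))" using vnorm_sum[of "{..k}" N g] by simp
    also have "vnorm N f0 \<le> C2 * \<rho> ^ k * vnorm N (\<lambda>r. stack I x v 0 r - hbar 0)"
    proof -
      have "vnorm N f0 \<le> opnorm N (M 0) * vnorm N (\<lambda>r. H 0 r - hbar 0)"
        unfolding f0_def by (rule opnorm_bound)
      also have "\<dots> \<le> C2 * \<rho> ^ k * vnorm N (\<lambda>r. H 0 r - hbar 0)"
        by (rule mult_right_mono) (use contr[of 0 k] in \<open>auto simp: M_def vnorm_nonneg\<close>)
      finally show ?thesis by (simp add: H_def)
    qed
    also have "(\<Sum>l\<le>k. vnorm N (g l)) \<le> (\<Sum>l\<le>k. C2 * (\<rho> ^ (k - l) * \<bar>\<delta> l\<bar>))"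
    proof (rule sum_mono)
      fix l assume l: "l \<in> {..k}"
      have "vnorm N (g l) = \<bar>\<delta> l\<bar> * vnorm N (mvmult N (M l) (e (ag l)))"
        unfolding g_def by (rule vnorm_scale)
      also have "\<dots> \<le> \<bar>\<delta> l\<bar> * (opnorm N (M l) * vnorm N (e (ag l)))"
        by (intro mult_left_mono opnorm_bound) auto
      also have "\<dots> \<le> \<bar>\<delta> l\<bar> * (C2 * \<rho> ^ (k - l))"
        using contr[of l k] l ve[OF agN[of l]] by (intro mult_left_mono) (auto simp: M_def)
      finally show "vnorm N (g l) \<le> C2 * (\<rho> ^ (k - l) * \<bar>\<delta> l\<bar>)" by (simp add: mult_ac)
    qed
    finally show "vnorm N (\<lambda>r. stack I x v (Suc k) r - hbar (Suc k))
           \<le> C2 * \<rho> ^ k * vnorm N (\<lambda>r. stack I x v 0 r - hbar 0)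
             + C2 * (\<Sum>l\<le>k. \<rho> ^ (k - l) * \<bar>\<delta> l\<bar>)"
      by (simp add: sum_distrib_left)
  qed
qed

end
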